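(* Suppose an ordered linear probing hash table with $n$ slots initially contains $(1-\epsilon)n$ keys (inserted into an empty table, with fully random hashes) and no tombstones. Let $c$ be a sufficiently large constant. Then for any interval $P\subseteq[n]$ with $|P|\ge c\,\epsilon^{-2}\log\epsilon^{-1}$, with probability $1-1/\mathrm{poly}(|P|)$ the interval $P$ contains $\Omega(\epsilon|P|)$ free slots.
   Context: Ordered linear probing: slots $1,\dots,n$; an inserted key $u$ is placed in the run starting at or covering $h(u)$ so that keys in each maximal run of occupied slots are stored in order of hash, shifting later keys right to the first free slot. $h$ is uniform and fully independent. "With probability $1-1/\mathrm{poly}(j)$" means for every constant $c'>0$, probability $1-O(j^{-c'})$. *)

theory Defs
  imports "HOL-Probability.Probability"
begin

text \<open>Ordered linear probing on a cyclic table with slots 0,...,n-1.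
  A table is a map from slots to the hash value of the key stored there
  (None = free slot).  Only hash values matter for the positions of keys;
  keys with equal hash are kept in insertion order.\<close>

type_synonym table = "nat \<Rightarrow> nat option"

definition cdist :: "nat \<Rightarrow> nat \<Rightarrow> nat \<Rightarrow> nat" where
  "cdist n a b = (b + n - a) mod n"

text \<open>Offset (from x) of the slot where a new key with hash x is placed:
  the first slot, scanning forward from x, that is free or holds a key whose
  hash comes strictly after x in the run (i.e. whose displacement is smaller
  than the distance from x).\<close>
definition ins_offset :: "nat \<Rightarrow> table \<Rightarrow> nat \<Rightarrow> nat" where
  "ins_offset n T x = (LEAST d. case T ((x + d) mod n) of
       None \<Rightarrow> True
     | Some y \<Rightarrow> cdist n y ((x + d) mod n) < d)"

definition free_offset :: "nat \<Rightarrow> table \<Rightarrow> nat \<Rightarrow> nat" where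
  "free_offset n T q = (LEAST e. T ((q + e) mod n) = None)"

definition olp_insert :: "nat \<Rightarrow> table \<Rightarrow> nat \<Rightarrow> table" where
  "olp_insert n T x =
     (if (\<forall>s<n. T s \<noteq> None) then T else
      (let q = (x + ins_offset n T x) mod n;
           e = free_offset n T q
       in (\<lambda>s. if s < n then
                  (let k = cdist n q s in
                   if k = 0 then Some x
                   else if k \<le> e then T ((s + n - 1) mod n)
                   else T s)
                else T s)))"

definition olp_table :: "nat \<Rightarrow> nat list \<Rightarrow> table" where
  "olp_table n hs = fold (\<lambda>x T. olp_insert n T x) hs (\<lambda>_. None)"

definition hash_dist :: "nat \<Rightarrow> nat \<Rightarrow> nat list pmf" where
  "hash_dist n m = pmf_of_set {hs. length hs = m \<and> set hs \<subseteq> {0..<n}}"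

definition free_slots :: "table \<Rightarrow> nat set \<Rightarrow> nat set" where
  "free_slots T P = {s \<in> P. T s = None}"

end

theory Submission
  imports Defs
begin


lemma cdist_lt: "0 < n \<Longrightarrow> cdist n a b < n"
  unfolding cdist_def by simp

lemma cdist_add: "a < n \<Longrightarrow> b < n \<Longrightarrow> (a + cdist n a b) mod n = b"
proof -
  assume a: "a < n" and b: "b < n"
  have "(a + (b + n - a) mod n) mod n = (a + (b + n - a)) mod n" by (simp add: mod_add_right_eq)
  also have "a + (b + n - a) = b + n" using a by simp
  finally show ?thesis using b unfolding cdist_def by simp
qed

lemma cdist_of_add: "a < n \<Longrightarrow> d < n \<Longrightarrow> cdist n a ((a + d) mod n) = d"
proof -
  assume a: "a < n" and d: "d < n"
  have "((a + d) mod n + n - a) mod n = ((a + d) mod n + (n - a)) mod n" using a by simp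
  also have "\<dots> = (a + d + (n - a)) mod n" by (simp add: mod_add_left_eq)
  also have "a + d + (n - a) = d + n" using a by simp
  finally show ?thesis unfolding cdist_def using d by simp
qed

lemma cdist_alt: "a < n \<Longrightarrow> b < n \<Longrightarrow> cdist n a b = (if a \<le> b then b - a else b + n - a)"
proof -
  assume a: "a < n" and b: "b < n"
  show ?thesis
  proof (cases "a \<le> b")
    case True
    have h: "b + n - a = (b - a) + n" using True by simp
    have "cdist n a b = (b - a) mod n" unfolding cdist_def h by simp
    then show ?thesis using True b by simp
  next
    case False
    then show ?thesis unfolding cdist_def using a b by simp
  qed
qed

lemma mod_alt: "(x::nat) < n \<Longrightarrow> k \<le> n \<Longrightarrow> (x + k) mod n = (if x + k < n then x + k else x + k - n)"
proof (cases "x + k < n")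
  case False
  assume "x < n" "k \<le> n"
  then have "(x + k) mod n = (x + k - n) mod n" using False by (intro le_mod_geq) simp
  then show ?thesis using False \<open>x < n\<close> \<open>k \<le> n\<close> by simp
qed simp

definition inv :: "nat \<Rightarrow> table \<Rightarrow> bool" where
  "inv n T \<longleftrightarrow> (\<forall>s. n \<le> s \<longrightarrow> T s = None) \<and>
     (\<forall>s y. s < n \<longrightarrow> T s = Some y \<longrightarrow> y < n \<and> (\<forall>k\<le>cdist n y s. T ((y + k) mod n) \<noteq> None))"

definition MS :: "nat \<Rightarrow> table \<Rightarrow> nat option multiset" where
  "MS n T = mset (map T [0..<n])"

lemma mod_pred: "(0::nat) < k \<Longrightarrow> 0 < n \<Longrightarrow> ((q + k) mod n + n - 1) mod n = (q + (k - 1)) mod n"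
proof -
  assume k: "0 < k" and n: "0 < n"
  have "((q + k) mod n + n - 1) mod n = ((q + k) mod n + (n - 1)) mod n" using n by simp
  also have "\<dots> = (q + k + (n - 1)) mod n" by (simp add: mod_add_left_eq)
  also have "q + k + (n - 1) = (q + (k - 1)) + n" using k n by simp
  finally show ?thesis by simp
qed

lemma insert_inv:
  assumes inv: "inv n T" and x: "x < n" and s0: "s0 < n" "T s0 = None"
  shows "inv n (olp_insert n T x) \<and> MS n (olp_insert n T x) = MS n T - {#None#} + {#Some x#}"
proof -
  have n: "0 < n" using s0 by simp
  define Q where "Q = (\<lambda>d. case T ((x + d) mod n) of None \<Rightarrow> True
     | Some y \<Rightarrow> cdist n y ((x + d) mod n) < d)"
  define io where "io = ins_offset n T x"
  have io_eq: "io = (LEAST d. Q d)" unfolding io_def ins_offset_def Q_def by simp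
  have Qs0: "Q (cdist n x s0)" unfolding Q_def using cdist_add[OF x s0(1)] s0 by simp
  have io_le: "io \<le> cdist n x s0" unfolding io_eq by (rule Least_le[where P=Q, OF Qs0])
  have io_lt: "io < n" using io_le cdist_lt[OF n, of x s0] by simp
  have io_occ: "T ((x + d) mod n) \<noteq> None" if "d < io" for d
  proof
    assume "T ((x + d) mod n) = None"
    then have "Q d" unfolding Q_def by simp
    then show False using not_less_Least[of d Q] that unfolding io_eq by simp
  qed
  define q where "q = (x + io) mod n"
  have q: "q < n" unfolding q_def using n by simp
  define e where "e = free_offset n T q"
  have e_eq: "e = (LEAST e. T ((q + e) mod n) = None)" unfolding e_def free_offset_def by simp
  have fe0: "T ((q + cdist n q s0) mod n) = None" using cdist_add[OF q s0(1)] s0 by simp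
  have e_le: "e \<le> cdist n q s0" unfolding e_eq by (rule Least_le[where P="\<lambda>e. T ((q + e) mod n) = None", OF fe0])
  have e_lt: "e < n" using e_le cdist_lt[OF n, of q s0] by simp
  have e_free: "T ((q + e) mod n) = None" unfolding e_eq by (rule LeastI[where P="\<lambda>e. T ((q + e) mod n) = None", OF fe0])
  have e_occ: "T ((q + d) mod n) \<noteq> None" if "d < e" for d
    using not_less_Least[of d "\<lambda>e. T ((q + e) mod n) = None"] that unfolding e_eq by simp
  have nf: "\<not> (\<forall>s<n. T s \<noteq> None)" using s0 by blast
  define T' where "T' = olp_insert n T x"
  have T'_def2: "T' = (\<lambda>s. if s < n then
                  (let k = cdist n q s in
                   if k = 0 then Some x
                   else if k \<le> e then T ((s + n - 1) mod n)
                   else T s)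
                else T s)"
    unfolding T'_def olp_insert_def e_def q_def io_def by (subst if_not_P[OF nf]) (simp only: Let_def)
  have T'_slot: "T' ((q + k) mod n) = (if k = 0 then Some x else if k \<le> e then T ((q + (k - 1)) mod n) else T ((q + k) mod n))"
    if k: "k < n" for k
    using cdist_of_add[OF q k] mod_pred[of k n q] n unfolding T'_def2 by (simp add: Let_def)
  have slot_cd: "(q + cdist n q s) mod n = s" if "s < n" for s using cdist_add[OF q that] .
  have mono: "T' s \<noteq> None" if s: "s < n" and occ: "T s \<noteq> None" for s
  proof -
    define k where "k = cdist n q s"
    have k: "k < n" unfolding k_def using cdist_lt[OF n] .
    have ss: "s = (q + k) mod n" using slot_cd[OF s] unfolding k_def by simp
    show ?thesis
      using T'_slot[OF k] e_occ[of "k - 1"] occ unfolding ss[symmetric] by (auto split: if_splits)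
  qed
  have T'_ge: "T' s = T s" if "n \<le> s" for s unfolding T'_def2 using that by simp
  have inv1: "\<forall>s. n \<le> s \<longrightarrow> T' s = None" using T'_ge inv unfolding inv_def by simp
  have inv2: "y < n \<and> (\<forall>j\<le>cdist n y s. T' ((y + j) mod n) \<noteq> None)"
    if s: "s < n" and sy: "T' s = Some y" for s y
  proof -
    define k where "k = cdist n q s"
    have k: "k < n" unfolding k_def using cdist_lt[OF n] .
    have ss: "s = (q + k) mod n" using slot_cd[OF s] unfolding k_def by simp
    have Ts: "T' s = (if k = 0 then Some x else if k \<le> e then T ((q + (k - 1)) mod n) else T ((q + k) mod n))"
      using T'_slot[OF k] ss by simp
    show ?thesis
    proof (cases "k = 0")
      case True
      then have yx: "y = x" and sq: "s = q" using Ts sy ss q by auto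
      have cd: "cdist n x s = io" using cdist_of_add[OF x io_lt] sq unfolding q_def by simp
      have "T' ((x + j) mod n) \<noteq> None" if j: "j \<le> io" for j
      proof (cases "j < io")
        case True
        then show ?thesis using mono[of "(x + j) mod n"] io_occ[OF True] n by simp
      next
        case False
        then have "j = io" using j by simp
        then show ?thesis using sy sq unfolding q_def by simp
      qed
      then show ?thesis using yx x cd by simp
    next
      case False
      note k0 = False
      show ?thesis
      proof (cases "k \<le> e")
        case True
        define s' where "s' = (q + (k - 1)) mod n"
        have s': "s' < n" unfolding s'_def using n by simp
        have Ts': "T s' = Some y" using Ts sy k0 True unfolding s'_def by simp
        have old: "y < n" "\<forall>j\<le>cdist n y s'. T ((y + j) mod n) \<noteq> None"
          using inv s' Ts' unfolding inv_def by blast+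
        define D where "D = cdist n y s'"
        have Dlt: "D + 1 < n"
        proof (rule ccontr)
          assume "\<not> D + 1 < n"
          then have "cdist n y s0 \<le> D" using cdist_lt[OF n, of y s0] by simp
          then have "T ((y + cdist n y s0) mod n) \<noteq> None" using old(2) unfolding D_def by blast
          then show False using cdist_add[OF old(1) s0(1)] s0(2) by simp
        qed
        have s'D: "s' = (y + D) mod n" using cdist_add[OF old(1) s'] unfolding D_def by simp
        have "s = (q + (k - 1) + 1) mod n" using ss k0 by simp
        also have "\<dots> = (s' + 1) mod n" unfolding s'_def by (simp add: mod_Suc_eq)
        also have "\<dots> = (y + (D + 1)) mod n" unfolding s'D by (simp add: mod_Suc_eq)
        finally have sD: "s = (y + (D + 1)) mod n" .
        have cd: "cdist n y s = D + 1" using cdist_of_add[OF old(1) Dlt] sD by simp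
        have "T' ((y + j) mod n) \<noteq> None" if j: "j \<le> D + 1" for j
        proof (cases "j \<le> D")
          case True
          then show ?thesis using mono[of "(y + j) mod n"] old(2) n unfolding D_def by simp
        next
          case False
          then have "j = D + 1" using j by simp
          then show ?thesis using sy sD by simp
        qed
        then show ?thesis using cd old(1) by simp
      next
        case False
        then have Tsy: "T s = Some y" using Ts sy k0 ss by simp
        have old: "y < n" "\<forall>j\<le>cdist n y s. T ((y + j) mod n) \<noteq> None"
          using inv s Tsy unfolding inv_def by blast+
        then show ?thesis using mono n by simp
      qed
    qed
  qed
  have INV: "inv n T'" unfolding inv_def using inv1 inv2 by blast
  define L where "L = map (\<lambda>k. T ((q + k) mod n)) [0..<n]"
  define L' where "L' = map (\<lambda>k. T' ((q + k) mod n)) [0..<n]"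
  have rot: "mset (map (\<lambda>k. f ((q + k) mod n)) [0..<n]) = mset (map f [0..<n])" for f :: "nat \<Rightarrow> nat option"
  proof -
    have "map (\<lambda>k. f ((q + k) mod n)) [0..<n] = rotate q (map f [0..<n])"
      by (rule nth_equalityI) (simp_all add: nth_rotate add.commute)
    moreover have "mset (rotate q xs) = mset xs" for xs :: "nat option list"
    proof -
      have "mset (rotate q xs) = mset (drop (q mod length xs) xs) + mset (take (q mod length xs) xs)"
        by (simp add: rotate_drop_take)
      also have "\<dots> = mset (take (q mod length xs) xs @ drop (q mod length xs) xs)"
        by (simp only: mset_append, rule union_commute)
      also have "\<dots> = mset xs" by (simp only: append_take_drop_id)
      finally show ?thesis .
    qed
    ultimately show ?thesis by simp
  qed
  have LL: "MS n T = mset L" "MS n T' = mset L'" unfolding MS_def L_def L'_def rot by simp_all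
  have lenL: "length L = n" unfolding L_def by simp
  have Le: "L ! e = None" unfolding L_def using e_lt e_free by simp
  have L'eq: "L' = Some x # take e L @ drop (Suc e) L"
  proof (rule nth_equalityI)
    show "length L' = length (Some x # take e L @ drop (Suc e) L)" using lenL e_lt unfolding L'_def by simp
    fix k assume "k < length L'"
    then have k: "k < n" unfolding L'_def by simp
    show "L' ! k = (Some x # take e L @ drop (Suc e) L) ! k"
    proof (cases "k = 0")
      case True then show ?thesis unfolding L'_def using T'_slot[OF k] k by simp
    next
      case False
      then obtain k' where kk: "k = Suc k'" by (cases k) auto
      show ?thesis
      proof (cases "k \<le> e")
        case True
        then show ?thesis unfolding L'_def kk using T'_slot[OF k] k lenL e_lt unfolding kk
          by (simp add: nth_append L_def)
      next
        case False
        then show ?thesis unfolding L'_def kk using T'_slot[OF k] k lenL e_lt unfolding kk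
          by (simp add: nth_append L_def)
      qed
    qed
  qed
  have "mset L = mset (take e L) + {#None#} + mset (drop (Suc e) L)"
  proof -
    have eqL: "L = take e L @ L ! e # drop (Suc e) L" using e_lt lenL by (intro id_take_nth_drop) simp
    have "mset L = mset (take e L @ L ! e # drop (Suc e) L)" using eqL by (rule arg_cong)
    then show ?thesis using Le by simp
  qed
  moreover have "mset L' = {#Some x#} + mset (take e L) + mset (drop (Suc e) L)"
    unfolding L'eq by simp
  ultimately have "MS n T' = MS n T - {#None#} + {#Some x#}" unfolding LL by simp
  then show ?thesis using INV unfolding T'_def by simp
qed



lemma mod_cancel_nat: "((a::nat) + c) mod n = (b + c) mod n \<Longrightarrow> a mod n = b mod n"
proof -
  assume "(a + c) mod n = (b + c) mod n"
  then obtain q1 q2 where "a + c + n * q1 = b + c + n * q2" by (auto simp: nat_mod_eq_iff)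
  then have "a + n * q1 = b + n * q2" by simp
  then show ?thesis by (auto simp: nat_mod_eq_iff)
qed

lemma table_inv:
  assumes "set hs \<subseteq> {0..<n}" "length hs < n"
  shows "inv n (olp_table n hs) \<and> MS n (olp_table n hs) = mset (map Some hs) + replicate_mset (n - length hs) None"
  using assms
proof (induction hs rule: rev_induct)
  case Nil
  have "MS n (\<lambda>_. None) = replicate_mset n None" unfolding MS_def
    by (simp add: map_replicate_const mset_replicate)
  then show ?case unfolding olp_table_def inv_def by simp
next
  case (snoc x hs)
  define T where "T = olp_table n hs"
  have IH: "inv n T" "MS n T = mset (map Some hs) + replicate_mset (n - length hs) None"
    using snoc unfolding T_def by auto
  have x: "x < n" using snoc.prems by auto
  have "None \<in># MS n T" using IH(2) snoc.prems by simp
  then obtain s0 where s0: "s0 < n" "T s0 = None" unfolding MS_def by auto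
  have eq: "olp_table n (hs @ [x]) = olp_insert n T x" unfolding olp_table_def T_def by simp
  have ins: "inv n (olp_insert n T x)" "MS n (olp_insert n T x) = MS n T - {#None#} + {#Some x#}"
    using insert_inv[OF IH(1) x s0] by auto
  have "n - length hs = Suc (n - length (hs @ [x]))" using snoc.prems by simp
  then have "MS n T - {#None#} + {#Some x#} = mset (map Some (hs @ [x])) + replicate_mset (n - length (hs @ [x])) None"
    unfolding IH(2) by simp
  then show ?case using ins eq by simp
qed

lemma card_slots_count:
  assumes "MS n T = mset (map Some hs) + replicate_mset k None"
  shows "card {s. s < n \<and> P (T s)} = length (filter (\<lambda>h. P (Some h)) hs) + (if P None then k else 0)"
proof -
  have "card {s. s < n \<and> P (T s)} = length (filter P (map T [0..<n]))"
    unfolding length_filter_conv_card by (intro arg_cong[where f=card]) auto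
  also have "\<dots> = size (filter_mset P (MS n T))" unfolding MS_def by (metis mset_filter size_mset)
  also have "\<dots> = length (filter (\<lambda>h. P (Some h)) hs) + (if P None then k else 0)"
  proof -
    have a: "size (filter_mset P (mset (map Some hs))) = length (filter (\<lambda>h. P (Some h)) hs)"
    proof -
      have "size (filter_mset P (mset (map Some hs))) = length (filter P (map Some hs))"
        by (metis mset_filter size_mset)
      also have "\<dots> = length (filter (\<lambda>h. P (Some h)) hs)" by (simp add: filter_map o_def)
      finally show ?thesis .
    qed
    have b: "size (filter_mset P (replicate_mset k None)) = (if P None then k else 0)"
      by (induction k) auto
    show ?thesis unfolding assms using a b by simp
  qed
  finally show ?thesis .
qed



lemma cross:
  assumes inv: "inv n T" and p: "p < n" and l: "l < n"
    and f1: "T ((p + n - 1) mod n) = None" and f2: "T ((p + l) mod n) = None"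
    and s: "s < n" and sy: "T s = Some y"
  shows "cdist n p y < l \<longleftrightarrow> cdist n p s < l"
proof -
  have n: "0 < n" using p by simp
  have y: "y < n" and path: "\<And>k. k \<le> cdist n y s \<Longrightarrow> T ((y + k) mod n) \<noteq> None"
    using inv s sy unfolding inv_def by blast+
  define D where "D = cdist n y s"
  define i where "i = cdist n p s"
  define j where "j = cdist n p y"
  have sD: "(y + D) mod n = s" unfolding D_def using cdist_add[OF y s] .
  have si: "(p + i) mod n = s" unfolding i_def using cdist_add[OF p s] .
  have yj: "(p + j) mod n = y" unfolding j_def using cdist_add[OF p y] .
  have Dn: "D < n" "i < n" "j < n" unfolding D_def i_def j_def using cdist_lt[OF n] by auto
  show ?thesis
  proof
    assume jl: "cdist n p y < l"
    show "cdist n p s < l"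
    proof (rule ccontr)
      assume il: "\<not> cdist n p s < l"
      have "l \<le> j + D"
      proof (rule ccontr)
        assume "\<not> l \<le> j + D"
        then have jD: "j + D < n" using l by simp
        have "(p + (j + D)) mod n = s"
        proof -
          have "(p + (j + D)) mod n = ((p + j) mod n + D) mod n" by (simp add: mod_add_left_eq add.assoc)
          then show ?thesis using yj sD by simp
        qed
        then have "cdist n p s = j + D" using cdist_of_add[OF p jD] by simp
        then show False using il \<open>\<not> l \<le> j + D\<close> by simp
      qed
      then have kD: "l - j \<le> D" by simp
      have "(y + (l - j)) mod n = (p + l) mod n"
      proof -
        have "(y + (l - j)) mod n = ((p + j) mod n + (l - j)) mod n" using yj by simp
        also have "\<dots> = (p + j + (l - j)) mod n" by (simp add: mod_add_left_eq)
        also have "p + j + (l - j) = p + l" using jl unfolding j_def by simp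
        finally show ?thesis .
      qed
      then show False using path[OF kD[unfolded D_def]] f2 by simp
    qed
  next
    assume il: "cdist n p s < l"
    show "cdist n p y < l"
    proof (rule ccontr)
      assume jl: "\<not> cdist n p y < l"
      have "i < D"
      proof (rule ccontr)
        assume "\<not> i < D"
        then have Di: "D \<le> i" by simp
        have "((p + (i - D)) + D) mod n = (y + D) mod n" using Di si sD by simp
        then have "(p + (i - D)) mod n = y mod n" by (rule mod_cancel_nat)
        then have "(p + (i - D)) mod n = y" using y by simp
        then have "cdist n p y = i - D" using cdist_of_add[OF p, of "i - D"] Dn by simp
        then show False using jl il unfolding i_def by simp
      qed
      then have kD: "D - i - 1 \<le> D" by simp
      have "((y + (D - i - 1)) + (i + 1)) mod n = ((p + n - 1) + (i + 1)) mod n"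
      proof -
        have e1: "(y + (D - i - 1)) + (i + 1) = y + D" using \<open>i < D\<close> by simp
        have e2: "(p + n - 1) + (i + 1) = (p + i) + n" using n by simp
        show ?thesis unfolding e1 e2 using sD si by simp
      qed
      then have "(y + (D - i - 1)) mod n = (p + n - 1) mod n" by (rule mod_cancel_nat)
      then show False using path[OF kD[unfolded D_def]] f1 by (simp add: D_def)
    qed
  qed
qed



lemma free_total:
  assumes "set hs \<subseteq> {0..<n}" "length hs < n"
  shows "card {s. s < n \<and> olp_table n hs s = None} = n - length hs"
  using card_slots_count[of n "olp_table n hs" hs "n - length hs" "\<lambda>v. v = None"] table_inv[OF assms] by simp

lemma table_structure:
  assumes hs: "set hs \<subseteq> {0..<n}" "length hs < n" and ab: "a < b" "b \<le> n"
  defines "T \<equiv> olp_table n hs"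
  defines "F \<equiv> card (free_slots T {a..<b})"
  shows "F = n - length hs \<or> (\<exists>t u. t + (b - a) + u < n \<and>
     length (filter (\<lambda>h. cdist n ((a + n - t) mod n) h < t + (b - a) + u) hs) + F = t + (b - a) + u)"
proof (cases "\<forall>s<n. s \<notin> {a..<b} \<longrightarrow> T s \<noteq> None")
  case True
  have "{s. s < n \<and> T s = None} = free_slots T {a..<b}"
    unfolding free_slots_def using True ab by auto
  then show ?thesis using free_total[OF hs] unfolding F_def T_def by simp
next
  case False
  then obtain f where f: "f < n" "f \<notin> {a..<b}" "T f = None" by blast
  have n: "0 < n" using f by simp
  have TI: "inv n T" "MS n T = mset (map Some hs) + replicate_mset (n - length hs) None"
    using table_inv[OF hs] unfolding T_def by auto
  define L where "L = b - a"
  define j where "j = (if b \<le> f then f - b else f + n - b)"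
  have jlt: "j < n - L" unfolding j_def L_def using f ab by auto
  have bj: "(b + j) mod n = f"
  proof (cases "b \<le> f")
    case True then show ?thesis unfolding j_def using f by simp
  next
    case False
    then have "b + j = f + n" unfolding j_def using ab by simp
    then show ?thesis using f by simp
  qed
  define i where "i = n - L - 1 - j"
  have ai: "(a + n - 1 - i) mod n = f"
  proof -
    have "a + n - 1 - i = b + j" unfolding i_def L_def using jlt ab unfolding L_def by auto
    then show ?thesis using bj by simp
  qed
  define U where "U = (\<lambda>u. T ((b + u) mod n) = None)"
  define Tt where "Tt = (\<lambda>t. T ((a + n - 1 - t) mod n) = None)"
  define u where "u = (LEAST u. U u)"
  define t where "t = (LEAST t. Tt t)"
  have Uj: "U j" unfolding U_def using bj f by simp
  have Ti: "Tt i" unfolding Tt_def using ai f by simp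
  have u_le: "u \<le> j" unfolding u_def by (rule Least_le[where P=U, OF Uj])
  have t_le: "t \<le> i" unfolding t_def by (rule Least_le[where P=Tt, OF Ti])
  have u_free: "T ((b + u) mod n) = None" using LeastI[where P=U, OF Uj] unfolding u_def U_def .
  have t_free: "T ((a + n - 1 - t) mod n) = None" using LeastI[where P=Tt, OF Ti] unfolding t_def Tt_def .
  have u_occ: "T ((b + k) mod n) \<noteq> None" if "k < u" for k
    using not_less_Least[where P=U, of k] that unfolding u_def U_def by blast
  have t_occ: "T ((a + n - 1 - k) mod n) \<noteq> None" if "k < t" for k
    using not_less_Least[where P=Tt, of k] that unfolding t_def Tt_def by blast
  define l where "l = t + L + u"
  have ln: "l < n" unfolding l_def i_def using t_le u_le jlt unfolding i_def by simp
  have tn: "t < n" using ln unfolding l_def by simp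
  define p where "p = (a + n - t) mod n"
  have p: "p < n" unfolding p_def using n by simp
  have f1: "T ((p + n - 1) mod n) = None"
  proof -
    have "(p + n - 1) mod n = (p + (n - 1)) mod n" using n by simp
    also have "\<dots> = (a + n - t + (n - 1)) mod n" unfolding p_def by (simp add: mod_add_left_eq)
    also have "a + n - t + (n - 1) = (a + n - 1 - t) + n" using tn by simp
    finally show ?thesis using t_free by simp
  qed
  have f2: "T ((p + l) mod n) = None"
  proof -
    have "(p + l) mod n = (a + n - t + l) mod n" unfolding p_def by (simp add: mod_add_left_eq)
    also have "a + n - t + l = (b + u) + n" unfolding l_def L_def using tn ab by simp
    finally show ?thesis using u_free by simp
  qed
  have crossset: "{s. s < n \<and> (case T s of None \<Rightarrow> False | Some y \<Rightarrow> cdist n p y < l)} =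
      {s. s < n \<and> T s \<noteq> None \<and> cdist n p s < l}"
    using cross[OF TI(1) p ln f1 f2] by (auto split: option.splits)
  have cnt: "card {s. s < n \<and> (case T s of None \<Rightarrow> False | Some y \<Rightarrow> cdist n p y < l)} =
      length (filter (\<lambda>h. cdist n p h < l) hs)"
    using card_slots_count[OF TI(2), of "\<lambda>v. case v of None \<Rightarrow> False | Some y \<Rightarrow> cdist n p y < l"] by simp
  define J where "J = {s. s < n \<and> cdist n p s < l}"
  have Jim: "J = (\<lambda>k. (p + k) mod n) ` {..<l}"
  proof
    show "J \<subseteq> (\<lambda>k. (p + k) mod n) ` {..<l}"
    proof
      fix s assume "s \<in> J"
      then have "s < n" "cdist n p s < l" unfolding J_def by auto
      then show "s \<in> (\<lambda>k. (p + k) mod n) ` {..<l}" using cdist_add[OF p \<open>s < n\<close>] by force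
    qed
    show "(\<lambda>k. (p + k) mod n) ` {..<l} \<subseteq> J"
      unfolding J_def using cdist_of_add[OF p] ln n by auto
  qed
  have cardJ: "card J = l"
  proof -
    have "inj_on (\<lambda>k. (p + k) mod n) {..<l}"
      by (rule inj_onI) (metis cdist_of_add[OF p] lessThan_iff ln order.strict_trans)
    then show ?thesis unfolding Jim by (simp add: card_image)
  qed
  have freeJ: "{s \<in> J. T s = None} = free_slots T {a..<b}"
  proof
    show "{s \<in> J. T s = None} \<subseteq> free_slots T {a..<b}"
    proof
      fix s assume sJ: "s \<in> {s \<in> J. T s = None}"
      then have s: "s < n" "cdist n p s < l" "T s = None" unfolding J_def by auto
      define k where "k = cdist n p s"
      have sk: "s = (a + n - t + k) mod n"
        using cdist_add[OF p s(1)] unfolding k_def p_def by (simp add: mod_add_left_eq)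
      have kl: "k < l" using s unfolding k_def by simp
      consider "k < t" | "t \<le> k" "k < t + L" | "t + L \<le> k" by linarith
      then show "s \<in> free_slots T {a..<b}"
      proof cases
        case 1
        have e: "a + n - t + k = a + n - 1 - (t - 1 - k)" using 1 tn by simp
        have "s = (a + n - 1 - (t - 1 - k)) mod n" using sk unfolding e .
        then show ?thesis using t_occ[of "t - 1 - k"] 1 s(3) by simp
      next
        case 2
        have e: "a + n - t + k = (a + (k - t)) + n" using 2 tn by simp
        have "s = ((a + (k - t)) + n) mod n" using sk unfolding e .
        moreover have "a + (k - t) < n" using 2 ab unfolding L_def by simp
        ultimately have "s = a + (k - t)" by (metis mod_add_self2 mod_less)
        then show ?thesis unfolding free_slots_def using 2 s(3) unfolding L_def by auto
      next
        case 3
        have e: "a + n - t + k = (b + (k - t - L)) + n" using 3 tn ab unfolding L_def by simp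
        have "s = ((b + (k - t - L)) + n) mod n" using sk unfolding e .
        then have "s = (b + (k - t - L)) mod n" by simp
        moreover have "k - t - L < u" using kl 3 unfolding l_def by simp
        ultimately show ?thesis using u_occ s(3) by metis
      qed
    qed
    show "free_slots T {a..<b} \<subseteq> {s \<in> J. T s = None}"
    proof
      fix s assume "s \<in> free_slots T {a..<b}"
      then have s: "a \<le> s" "s < b" "T s = None" unfolding free_slots_def by auto
      define k where "k = s - a + t"
      have kl: "k < l" unfolding k_def l_def L_def using s by simp
      have "(p + k) mod n = (a + n - t + k) mod n" unfolding p_def by (simp add: mod_add_left_eq)
      also have "a + n - t + k = s + n" unfolding k_def using s tn by simp
      finally have "(p + k) mod n = s" using s ab by simp
      then have "cdist n p s = k" using cdist_of_add[OF p, of k] kl ln by simp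
      then show "s \<in> {s \<in> J. T s = None}" unfolding J_def using s ab kl by simp
    qed
  qed
  have "{s \<in> J. T s \<noteq> None} \<union> {s \<in> J. T s = None} = J" by auto
  moreover have "finite J" unfolding J_def by simp
  ultimately have "card {s \<in> J. T s \<noteq> None} + card {s \<in> J. T s = None} = card J"
    by (metis (no_types, lifting) card_Un_disjoint disjoint_iff finite_Un mem_Collect_eq)
  moreover have "{s \<in> J. T s \<noteq> None} = {s. s < n \<and> T s \<noteq> None \<and> cdist n p s < l}" unfolding J_def by auto
  ultimately have "length (filter (\<lambda>h. cdist n p h < l) hs) + F = l"
    using cnt crossset freeJ cardJ unfolding F_def by simp
  then show ?thesis using ln unfolding p_def l_def L_def by blast
qed



definition LS :: "nat \<Rightarrow> nat \<Rightarrow> nat list set" where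
  "LS n m = {hs. set hs \<subseteq> {0..<n} \<and> length hs = m}"

lemma sum_exp_lists:
  "(\<Sum>hs\<in>LS n m. exp (lam * real (length (filter P hs)))) = (\<Sum>x\<in>{0..<n}. exp (lam * (if P x then 1 else 0)))^m"
proof (induction m)
  case 0
  have "LS n 0 = {[]}" unfolding LS_def by auto
  then show ?case by simp
next
  case (Suc m)
  have eq: "LS n (Suc m) = (\<lambda>(xs, x). x # xs) ` (LS n m \<times> {0..<n})"
    unfolding LS_def by (rule lists_length_Suc_eq)
  have inj: "inj_on (\<lambda>(xs, x). x # xs) (LS n m \<times> {0..<n})" by (auto simp: inj_on_def)
  have fin: "finite (LS n m)" unfolding LS_def by (rule finite_lists_length_eq) simp
  have "(\<Sum>hs\<in>LS n (Suc m). exp (lam * real (length (filter P hs)))) =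
        (\<Sum>(xs, x)\<in>LS n m \<times> {0..<n}. exp (lam * real (length (filter P (x # xs)))))"
    unfolding eq by (subst sum.reindex[OF inj]) (simp add: case_prod_unfold)
  also have "\<dots> = (\<Sum>xs\<in>LS n m. \<Sum>x\<in>{0..<n}. exp (lam * real (length (filter P (x # xs)))))"
    by (rule sum.cartesian_product[symmetric])
  also have "\<dots> = (\<Sum>xs\<in>LS n m. exp (lam * real (length (filter P xs))) * (\<Sum>x\<in>{0..<n}. exp (lam * (if P x then 1 else 0))))"
    by (rule sum.cong[OF refl], simp add: sum_distrib_left, rule sum.cong[OF refl])
       (simp add: distrib_left exp_add mult.commute)
  also have "\<dots> = (\<Sum>x\<in>{0..<n}. exp (lam * (if P x then 1 else 0))) ^ Suc m"
    by (simp add: sum_distrib_right[symmetric] Suc.IH mult.commute)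
  finally show ?case .
qed

lemma sum_exp_indicator:
  "(\<Sum>x\<in>{0..<n}. exp (lam * (if P x then 1 else 0))) =
     real (n - card {x\<in>{0..<n}. P x}) + real (card {x\<in>{0..<n}. P x}) * exp lam"
proof -
  have "(\<Sum>x\<in>{0..<n}. exp (lam * (if P x then 1 else 0))) = (\<Sum>x\<in>{0..<n}. if P x then exp lam else 1)"
    by (rule sum.cong) auto
  also have "\<dots> = real (card {x\<in>{0..<n}. P x}) * exp lam + real (card {x\<in>{0..<n}. \<not> P x})"
    by (simp add: sum.If_cases Int_def)
  also have "card {x\<in>{0..<n}. \<not> P x} = n - card {x\<in>{0..<n}. P x}"
  proof -
    have "card {x\<in>{0..<n}. \<not> P x} + card {x\<in>{0..<n}. P x} = n"
    proof -
      have "{x\<in>{0..<n}. \<not> P x} \<union> {x\<in>{0..<n}. P x} = {0..<n}" by auto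
      then have "card ({x\<in>{0..<n}. \<not> P x} \<union> {x\<in>{0..<n}. P x}) = n" by simp
      moreover have "card ({x\<in>{0..<n}. \<not> P x} \<union> {x\<in>{0..<n}. P x}) = card {x\<in>{0..<n}. \<not> P x} + card {x\<in>{0..<n}. P x}"
        by (rule card_Un_disjoint) auto
      ultimately show ?thesis by simp
    qed
    then show ?thesis by simp
  qed
  finally show ?thesis by simp
qed

lemma tail_bound:
  assumes n: "0 < n" and lam: "0 \<le> lam"
  shows "measure_pmf.prob (hash_dist n m) {hs. K \<le> real (length (filter P hs))}
     \<le> exp (- lam * K) * (1 + real (card {x\<in>{0..<n}. P x}) / real n * (exp lam - 1)) ^ m"
proof -
  define c0 where "c0 = card {x\<in>{0..<n}. P x}"
  have c0n: "c0 \<le> n" unfolding c0_def using card_mono[of "{0..<n}" "{x\<in>{0..<n}. P x}"] by force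
  define S where "S = LS n m"
  have Seq: "{hs. length hs = m \<and> set hs \<subseteq> {0..<n}} = S" unfolding S_def LS_def by auto
  have finS: "finite S" unfolding S_def LS_def by (rule finite_lists_length_eq) simp
  have neS: "S \<noteq> {}" using n unfolding S_def LS_def by (auto intro!: exI[of _ "replicate m 0"])
  have cardS: "card S = n ^ m" unfolding S_def LS_def using card_lists_length_eq[of "{0..<n}" m] by simp
  define E where "E = {hs. K \<le> real (length (filter P hs))}"
  define g where "g = (\<lambda>hs. exp (lam * (real (length (filter P hs)) - K)))"
  have prob: "measure_pmf.prob (hash_dist n m) E = real (card (S \<inter> E)) / real (card S)"
    unfolding hash_dist_def Seq using measure_pmf_of_set[OF neS finS] by simp
  have "real (card (S \<inter> E)) = (\<Sum>hs\<in>S \<inter> E. 1)" by simp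
  also have "\<dots> \<le> (\<Sum>hs\<in>S \<inter> E. g hs)"
    by (rule sum_mono) (auto simp: g_def E_def lam)
  also have "\<dots> \<le> (\<Sum>hs\<in>S. g hs)"
    by (rule sum_mono2) (auto simp: finS g_def)
  also have "\<dots> = exp (- lam * K) * (\<Sum>hs\<in>S. exp (lam * real (length (filter P hs))))"
    unfolding g_def by (simp add: sum_distrib_left right_diff_distrib exp_diff exp_minus field_simps)
  also have "\<dots> = exp (- lam * K) * (real (n - c0) + real c0 * exp lam) ^ m"
    unfolding S_def sum_exp_lists sum_exp_indicator c0_def by simp
  finally have bound: "real (card (S \<inter> E)) \<le> exp (- lam * K) * (real (n - c0) + real c0 * exp lam) ^ m" .
  have "(real (n - c0) + real c0 * exp lam) / real n = 1 + real c0 / real n * (exp lam - 1)"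
    using n c0n by (simp add: field_simps of_nat_diff)
  then have eq: "(real (n - c0) + real c0 * exp lam) ^ m / real (n ^ m) = (1 + real c0 / real n * (exp lam - 1)) ^ m"
    by (simp add: power_divide[symmetric])
  have "measure_pmf.prob (hash_dist n m) E \<le> exp (- lam * K) * (real (n - c0) + real c0 * exp lam) ^ m / real (n ^ m)"
    unfolding prob cardS using bound n by (simp add: divide_right_mono)
  also have "\<dots> = exp (- lam * K) * (1 + real c0 / real n * (exp lam - 1)) ^ m"
    using eq by (metis times_divide_eq_right)
  finally show ?thesis unfolding E_def c0_def .
qed



lemma card_cint:
  assumes p: "p < n" and l: "l \<le> n"
  shows "card {x\<in>{0..<n}. cdist n p x < l} = l"
proof -
  have n: "0 < n" using p by simp
  have Jim: "{x\<in>{0..<n}. cdist n p x < l} = (\<lambda>k. (p + k) mod n) ` {..<l}"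
  proof
    show "{x\<in>{0..<n}. cdist n p x < l} \<subseteq> (\<lambda>k. (p + k) mod n) ` {..<l}"
    proof
      fix s assume "s \<in> {x\<in>{0..<n}. cdist n p x < l}"
      then have "s < n" "cdist n p s < l" by auto
      then show "s \<in> (\<lambda>k. (p + k) mod n) ` {..<l}" using cdist_add[OF p \<open>s < n\<close>] by force
    qed
    show "(\<lambda>k. (p + k) mod n) ` {..<l} \<subseteq> {x\<in>{0..<n}. cdist n p x < l}"
      using cdist_of_add[OF p] l n by auto
  qed
  have "inj_on (\<lambda>k. (p + k) mod n) {..<l}"
    by (rule inj_onI) (metis cdist_of_add[OF p] lessThan_iff l order.strict_trans2)
  then show ?thesis unfolding Jim by (simp add: card_image)
qed

lemma event_bound:
  assumes mn: "m < n" and p: "p < n" and l: "l < n"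
  defines "\<epsilon> \<equiv> 1 - real m / real n"
  shows "measure_pmf.prob (hash_dist n m) {hs. (1 - \<epsilon> / 2) * real l \<le> real (length (filter (\<lambda>h. cdist n p h < l) hs))}
     \<le> exp (- (\<epsilon>\<^sup>2 / 16) * real l)"
proof -
  have n: "0 < n" using mn by simp
  have eps: "0 < \<epsilon>" "\<epsilon> \<le> 1" unfolding \<epsilon>_def using mn by (auto simp: field_simps)
  have mn_eq: "real m / real n = 1 - \<epsilon>" unfolding \<epsilon>_def by simp
  define lam where "lam = \<epsilon> / 4"
  have lam: "0 \<le> lam" "lam \<le> 1" unfolding lam_def using eps by auto
  define z where "z = real l / real n * (exp lam - 1)"
  have z0: "0 \<le> z" unfolding z_def using lam by simp
  have "measure_pmf.prob (hash_dist n m) {hs. (1 - \<epsilon> / 2) * real l \<le> real (length (filter (\<lambda>h. cdist n p h < l) hs))}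
     \<le> exp (- lam * ((1 - \<epsilon> / 2) * real l)) * (1 + z) ^ m"
    using tail_bound[OF n lam(1), of m "(1 - \<epsilon> / 2) * real l" "\<lambda>h. cdist n p h < l"]
      card_cint[OF p, of l] l unfolding z_def by simp
  also have "(1 + z) ^ m \<le> exp z ^ m"
    by (rule power_mono) (use z0 exp_ge_add_one_self[of z] in auto)
  also have "exp z ^ m = exp (real m * z)" by (simp add: exp_of_nat_mult)
  also have "exp (- lam * ((1 - \<epsilon> / 2) * real l)) * exp (real m * z) = exp (- lam * ((1 - \<epsilon> / 2) * real l) + real m * z)"
    by (rule exp_add[symmetric])
  also have "\<dots> \<le> exp (- (\<epsilon>\<^sup>2 / 16) * real l)"
  proof (subst exp_le_cancel_iff)
    have e1: "exp lam - 1 \<le> lam + lam\<^sup>2" using exp_bound[OF lam] by simp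
    have "real m * z = (real m / real n) * real l * (exp lam - 1)" unfolding z_def by simp
    also have "\<dots> = (1 - \<epsilon>) * real l * (exp lam - 1)" unfolding mn_eq ..
    also have "\<dots> \<le> (1 - \<epsilon>) * real l * (lam + lam\<^sup>2)"
      by (rule mult_left_mono[OF e1]) (use eps in simp)
    finally have "real m * z \<le> (1 - \<epsilon>) * real l * (lam + lam\<^sup>2)" .
    moreover have "- lam * ((1 - \<epsilon> / 2) * real l) + (1 - \<epsilon>) * real l * (lam + lam\<^sup>2) \<le> - (\<epsilon>\<^sup>2 / 16) * real l"
    proof -
      have "- lam * ((1 - \<epsilon> / 2) * real l) + (1 - \<epsilon>) * real l * (lam + lam\<^sup>2)
          = real l * (- \<epsilon>\<^sup>2 / 8 + (1 - \<epsilon>) * \<epsilon>\<^sup>2 / 16)"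
        unfolding lam_def by (simp add: power2_eq_square field_simps)
      also have "\<dots> \<le> real l * (- \<epsilon>\<^sup>2 / 16)"
        by (rule mult_left_mono) (use eps in \<open>auto simp: power2_eq_square field_simps\<close>)
      finally show ?thesis by (simp add: mult.commute)
    qed
    ultimately show "- lam * ((1 - \<epsilon> / 2) * real l) + real m * z \<le> - (\<epsilon>\<^sup>2 / 16) * real l" by linarith
  qed
  finally show ?thesis by (simp add: mult_left_mono)
qed



lemma geom_bound:
  fixes k :: real
  assumes k: "0 < k" "k \<le> 1"
  shows "(\<Sum>i<n. exp (- k) ^ i) \<le> 2 / k"
proof -
  define r where "r = exp (- k)"
  have r: "0 < r" "r < 1" unfolding r_def using k exp_less_cancel_iff[of "-k" 0] by auto
  have "exp k \<ge> 1 + k" by (rule exp_ge_add_one_self)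
  then have "r \<le> 1 / (1 + k)" unfolding r_def using k by (simp add: exp_minus field_simps)
  then have "1 - r \<ge> k / (1 + k)" using k by (simp add: field_simps)
  moreover have "k / (1 + k) \<ge> k / 2" using k by (intro divide_left_mono) auto
  ultimately have omr: "1 - r \<ge> k / 2" by linarith
  have "(\<Sum>i<n. r ^ i) = (1 - r ^ n) / (1 - r)" using r by (simp add: sum_gp_strict)
  also have "\<dots> \<le> 1 / (1 - r)" using r by (simp add: divide_right_mono)
  also have "\<dots> \<le> 1 / (k / 2)" using omr k by (intro divide_left_mono) auto
  finally show ?thesis unfolding r_def by simp
qed

lemma bad_bound:
  assumes mn: "m < n" and ab: "a < b" "b \<le> n"
  defines "\<epsilon> \<equiv> 1 - real m / real n"
  shows "measure_pmf.prob (hash_dist n m)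
          {hs. real (card (free_slots (olp_table n hs) {a..<b})) < 1/2 * \<epsilon> * real (b - a)}
         \<le> 4 / (\<epsilon>\<^sup>2 / 16)\<^sup>2 * exp (- (\<epsilon>\<^sup>2 / 16) * real (b - a))"
proof -
  have n: "0 < n" using mn by simp
  have eps: "0 < \<epsilon>" "\<epsilon> \<le> 1" unfolding \<epsilon>_def using mn by (auto simp: field_simps)
  define L where "L = b - a"
  define \<kappa> where "\<kappa> = \<epsilon>\<^sup>2 / 16"
  have kap: "0 < \<kappa>" "\<kappa> \<le> 1" unfolding \<kappa>_def using eps power_le_one[of \<epsilon> 2] by auto
  define B where "B = {hs. real (card (free_slots (olp_table n hs) {a..<b})) < 1/2 * \<epsilon> * real (b - a)}"
  define I where "I = {(t, u). t + L + u < n}"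
  define E where "E = (\<lambda>(t, u). {hs. (1 - \<epsilon> / 2) * real (t + L + u) \<le>
        real (length (filter (\<lambda>h. cdist n ((a + n - t) mod n) h < t + L + u) hs))})"
  have Isub: "I \<subseteq> {..<n} \<times> {..<n}" unfolding I_def by auto
  have finI: "finite I" using Isub finite_subset by blast
  define S where "S = {hs. length hs = m \<and> set hs \<subseteq> {0..<n}}"
  have finS: "finite S" unfolding S_def
    using finite_lists_length_eq[of "{0..<n}" m] by (simp add: conj_commute)
  have neS: "S \<noteq> {}" unfolding S_def by (auto intro!: exI[of _ "replicate m 0"] simp: n)
  have supp: "set_pmf (hash_dist n m) = S" unfolding hash_dist_def S_def[symmetric]
    using finS neS by simp
  have sub: "B \<inter> set_pmf (hash_dist n m) \<subseteq> (\<Union>i\<in>I. E i)"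
  proof
    fix hs assume "hs \<in> B \<inter> set_pmf (hash_dist n m)"
    then have hsB: "real (card (free_slots (olp_table n hs) {a..<b})) < 1/2 * \<epsilon> * real L"
      and hsS: "length hs = m" "set hs \<subseteq> {0..<n}" unfolding B_def supp S_def L_def by auto
    define F where "F = card (free_slots (olp_table n hs) {a..<b})"
    have Ln: "L \<le> n" unfolding L_def using ab by simp
    from table_structure[OF hsS(2) _ ab, unfolded hsS(1)] mn
    consider "F = n - m" | t u where "t + L + u < n"
       "length (filter (\<lambda>h. cdist n ((a + n - t) mod n) h < t + L + u) hs) + F = t + L + u"
      unfolding F_def L_def by auto
    then show "hs \<in> (\<Union>i\<in>I. E i)"
    proof cases
      case 1
      have "real F = \<epsilon> * real n" using 1 mn n unfolding \<epsilon>_def by (simp add: of_nat_diff field_simps)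
      moreover have "\<epsilon> * real L \<le> \<epsilon> * real n" using Ln eps by simp
      moreover have "0 \<le> \<epsilon> * real L" using eps by simp
      ultimately have "1/2 * \<epsilon> * real L \<le> real F" by linarith
      then show ?thesis using hsB unfolding F_def by simp
    next
      case 2
      have "1/2 * \<epsilon> * real L \<le> 1/2 * \<epsilon> * real (t + L + u)" using eps by simp
      then have "(1 - \<epsilon> / 2) * real (t + L + u) \<le>
        real (length (filter (\<lambda>h. cdist n ((a + n - t) mod n) h < t + L + u) hs))"
      proof -
        define cnt where "cnt = length (filter (\<lambda>h. cdist n ((a + n - t) mod n) h < t + L + u) hs)"
        have "real cnt + real F = real (t + L + u)" using 2(2) unfolding cnt_def
          by (metis of_nat_add)
        moreover have "real F < 1/2 * \<epsilon> * real L" using hsB unfolding F_def .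
        moreover have "(1 - \<epsilon> / 2) * real (t + L + u) = real (t + L + u) - 1/2 * \<epsilon> * real (t + L + u)"
          by (simp add: algebra_simps)
        ultimately have "(1 - \<epsilon> / 2) * real (t + L + u) \<le> real cnt"
          using \<open>1/2 * \<epsilon> * real L \<le> 1/2 * \<epsilon> * real (t + L + u)\<close> by linarith
        then show ?thesis unfolding cnt_def .
      qed
      then show ?thesis using 2(1) unfolding I_def E_def by auto
    qed
  qed
  have "measure_pmf.prob (hash_dist n m) B = measure_pmf.prob (hash_dist n m) (B \<inter> set_pmf (hash_dist n m))"
    by (simp add: measure_Int_set_pmf)
  also have "\<dots> \<le> measure_pmf.prob (hash_dist n m) (\<Union>i\<in>I. E i)"
    by (rule measure_pmf.finite_measure_mono[OF sub]) simp
  also have "\<dots> \<le> (\<Sum>i\<in>I. measure_pmf.prob (hash_dist n m) (E i))"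
    by (rule measure_pmf.finite_measure_subadditive_finite[OF finI]) simp
  also have "\<dots> \<le> (\<Sum>(t, u)\<in>I. exp (- \<kappa> * real (t + L + u)))"
  proof (rule sum_mono)
    fix i assume "i \<in> I"
    then obtain t u where i: "i = (t, u)" "t + L + u < n" unfolding I_def by auto
    have p: "(a + n - t) mod n < n" using n by simp
    show "measure_pmf.prob (hash_dist n m) (E i) \<le> (case i of (t, u) \<Rightarrow> exp (- \<kappa> * real (t + L + u)))"
      using event_bound[OF mn p i(2)] unfolding i E_def \<kappa>_def \<epsilon>_def by simp
  qed
  also have "\<dots> \<le> (\<Sum>(t, u)\<in>{..<n} \<times> {..<n}. exp (- \<kappa> * real (t + L + u)))"
    by (rule sum_mono2) (use Isub in auto)
  also have "\<dots> = (\<Sum>(t, u)\<in>{..<n} \<times> {..<n}. exp (- \<kappa> * real L) * (exp (- \<kappa>) ^ t * exp (- \<kappa>) ^ u))"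
    by (rule sum.cong) (auto simp: exp_of_nat_mult[symmetric] exp_add[symmetric] algebra_simps)
  also have "\<dots> = (\<Sum>t<n. \<Sum>u<n. exp (- \<kappa> * real L) * (exp (- \<kappa>) ^ t * exp (- \<kappa>) ^ u))"
    by (rule sum.cartesian_product[symmetric])
  also have "\<dots> = exp (- \<kappa> * real L) * (\<Sum>t<n. \<Sum>u<n. exp (- \<kappa>) ^ t * exp (- \<kappa>) ^ u)"
    by (simp add: sum_distrib_left)
  also have "\<dots> = exp (- \<kappa> * real L) * ((\<Sum>t<n. exp (- \<kappa>) ^ t) * (\<Sum>u<n. exp (- \<kappa>) ^ u))"
    by (simp only: sum_product)
  also have "\<dots> \<le> exp (- \<kappa> * real L) * ((2 / \<kappa>) * (2 / \<kappa>))"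
    using geom_bound[OF kap, of n] kap by (intro mult_left_mono mult_mono) (auto intro: sum_nonneg)
  also have "\<dots> = 4 / \<kappa>\<^sup>2 * exp (- \<kappa> * real L)" by (simp add: power2_eq_square)
  finally show ?thesis unfolding B_def \<kappa>_def L_def .
qed



lemma final_ineq:
  fixes \<epsilon> L c c' :: real
  assumes eps: "0 < \<epsilon>" "\<epsilon> \<le> 1" and L: "1 \<le> L" and c': "0 < c'"
    and c: "32 * (4 + 2 * c') \<le> c"
    and hyp: "c * \<epsilon> powr (-2) * ln (1 / \<epsilon>) \<le> L"
  shows "4 / (\<epsilon>\<^sup>2 / 16)\<^sup>2 * exp (- (\<epsilon>\<^sup>2 / 16) * L)
      \<le> exp (ln 1024 + c' * ln 16 + c' * ln (2 * c')) * L powr (- c')"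
proof -
  define x where "x = \<epsilon>\<^sup>2 / 16 * L"
  define y where "y = ln (1 / \<epsilon>)"
  have x0: "0 < x" unfolding x_def using eps L by simp
  have y0: "0 \<le> y" unfolding y_def using eps by simp
  have "0 < 32 * (4 + 2 * c')" using c' by simp
  then have cpos: "0 < c" using c by linarith
  have ey: "exp y = 1 / \<epsilon>" unfolding y_def using eps by simp
  have "\<epsilon> powr (-2) = 1 / \<epsilon>\<^sup>2" using eps by (simp add: powr_minus powr_realpow inverse_eq_divide)
  then have "c * y / \<epsilon>\<^sup>2 \<le> L" using hyp unfolding y_def by simp
  then have "c * y \<le> \<epsilon>\<^sup>2 * L" using eps by (simp add: field_simps)
  then have "c * y \<le> 16 * x" unfolding x_def by simp
  then have y_le: "y \<le> 16 * x / c" using cpos by (simp add: field_simps)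
  have yb: "(4 + 2 * c') * y \<le> x / 2"
  proof -
    have "(4 + 2 * c') * y \<le> (4 + 2 * c') * (16 * x / c)" using y_le c' by (intro mult_left_mono) auto
    also have "\<dots> = 16 * x * (4 + 2 * c') / c" by simp
    also have "\<dots> \<le> 16 * x * (4 + 2 * c') / (32 * (4 + 2 * c'))"
      using c c' x0 by (intro divide_left_mono) auto
    also have "\<dots> = x / 2" using c' by (simp add: field_simps)
    finally show ?thesis .
  qed
  have lnx: "c' * ln x \<le> c' * ln (2 * c') + x / 2"
  proof -
    have "ln (x / (2 * c')) \<le> x / (2 * c') - 1" using x0 c' by (intro ln_le_minus_one) auto
    moreover have "ln (x / (2 * c')) = ln x - ln (2 * c')" using x0 c' by (simp add: ln_div)
    ultimately have "ln x \<le> ln (2 * c') + x / (2 * c')" by simp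
    then have "c' * ln x \<le> c' * (ln (2 * c') + x / (2 * c'))" using c' by simp
    also have "\<dots> = c' * ln (2 * c') + x / 2" using c' by (simp add: field_simps)
    finally show ?thesis .
  qed
  have Lx: "L = 16 * x * exp y ^ 2" unfolding x_def ey using eps by (simp add: field_simps power2_eq_square)
  have lnL: "ln L = ln 16 + ln x + 2 * y"
  proof -
    have "ln L = ln (16 * x) + ln (exp y ^ 2)" unfolding Lx using x0 by (simp add: ln_mult)
    also have "\<dots> = ln 16 + ln x + 2 * y" using x0 by (simp add: ln_mult ln_realpow)
    finally show ?thesis .
  qed
  have lhs: "4 / (\<epsilon>\<^sup>2 / 16)\<^sup>2 * exp (- (\<epsilon>\<^sup>2 / 16) * L) = exp (ln 1024 + 4 * y - x)"
  proof -
    have "exp (ln 1024 + 4 * y - x) = 1024 * exp y ^ 4 * exp (- x)"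
      by (simp add: exp_add exp_diff exp_minus exp_of_nat_mult[symmetric] field_simps)
    also have "\<dots> = 4 / (\<epsilon>\<^sup>2 / 16)\<^sup>2 * exp (- (\<epsilon>\<^sup>2 / 16) * L)"
      unfolding ey x_def using eps by (simp add: field_simps power2_eq_square power4_eq_xxxx)
    finally show ?thesis by simp
  qed
  have rhs: "exp (ln 1024 + c' * ln 16 + c' * ln (2 * c')) * L powr (- c') =
      exp (ln 1024 + c' * ln 16 + c' * ln (2 * c') - c' * ln L)"
    using L by (simp add: powr_def exp_diff exp_minus field_simps)
  have "ln 1024 + 4 * y - x \<le> ln 1024 + c' * ln 16 + c' * ln (2 * c') - c' * ln L"
    unfolding lnL using yb lnx by (simp add: algebra_simps)
  then show ?thesis unfolding lhs rhs by simp
qed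

theorem mainTheorem9:
  "\<exists>\<delta>>0. \<forall>c'>0. \<exists>c0>0. \<forall>c\<ge>c0. \<exists>C>0.
     \<forall>n m a b. m < n \<longrightarrow> a < b \<longrightarrow> b \<le> n \<longrightarrow>
       (let \<epsilon> = 1 - real m / real n in
        real (b - a) \<ge> c * \<epsilon> powr (-2) * ln (1 / \<epsilon>) \<longrightarrow>
        measure_pmf.prob (hash_dist n m)
          {hs. real (card (free_slots (olp_table n hs) {a..<b})) < \<delta> * \<epsilon> * real (b - a)}
        \<le> C * real (b - a) powr (- c'))"
proof (rule exI[of _ "1/2 :: real"], intro conjI allI impI)
  show "0 < (1/2::real)" by simp
  fix c' :: real assume c': "0 < c'"
  show "\<exists>c0>0. \<forall>c\<ge>c0. \<exists>C>0.
     \<forall>n m a b. m < n \<longrightarrow> a < b \<longrightarrow> b \<le> n \<longrightarrow>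
       (let \<epsilon> = 1 - real m / real n in
        real (b - a) \<ge> c * \<epsilon> powr (-2) * ln (1 / \<epsilon>) \<longrightarrow>
        measure_pmf.prob (hash_dist n m)
          {hs. real (card (free_slots (olp_table n hs) {a..<b})) < 1/2 * \<epsilon> * real (b - a)}
        \<le> C * real (b - a) powr (- c'))"
  proof (rule exI[of _ "32 * (4 + 2 * c')"], intro conjI allI impI)
    show "0 < 32 * (4 + 2 * c')" using c' by simp
    fix c :: real assume c: "32 * (4 + 2 * c') \<le> c"
    show "\<exists>C>0. \<forall>n m a b. m < n \<longrightarrow> a < b \<longrightarrow> b \<le> n \<longrightarrow>
       (let \<epsilon> = 1 - real m / real n in
        real (b - a) \<ge> c * \<epsilon> powr (-2) * ln (1 / \<epsilon>) \<longrightarrow>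
        measure_pmf.prob (hash_dist n m)
          {hs. real (card (free_slots (olp_table n hs) {a..<b})) < 1/2 * \<epsilon> * real (b - a)}
        \<le> C * real (b - a) powr (- c'))"
    proof (rule exI[of _ "exp (ln 1024 + c' * ln 16 + c' * ln (2 * c'))"], intro conjI allI impI)
      show "0 < exp (ln 1024 + c' * ln 16 + c' * ln (2 * c'))" by simp
      fix n m a b :: nat assume mn: "m < n" and ab: "a < b" "b \<le> n"
      define \<epsilon> where "\<epsilon> = 1 - real m / real n"
      have eps: "0 < \<epsilon>" "\<epsilon> \<le> 1" unfolding \<epsilon>_def using mn by (auto simp: field_simps)
      have L: "1 \<le> real (b - a)" using ab by simp
      show "let \<epsilon> = 1 - real m / real n in
        real (b - a) \<ge> c * \<epsilon> powr (-2) * ln (1 / \<epsilon>) \<longrightarrow>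
        measure_pmf.prob (hash_dist n m)
          {hs. real (card (free_slots (olp_table n hs) {a..<b})) < 1/2 * \<epsilon> * real (b - a)}
        \<le> exp (ln 1024 + c' * ln 16 + c' * ln (2 * c')) * real (b - a) powr (- c')"
        unfolding Let_def \<epsilon>_def[symmetric]
      proof
        assume hyp: "c * \<epsilon> powr (-2) * ln (1 / \<epsilon>) \<le> real (b - a)"
        show "measure_pmf.prob (hash_dist n m)
          {hs. real (card (free_slots (olp_table n hs) {a..<b})) < 1/2 * \<epsilon> * real (b - a)}
        \<le> exp (ln 1024 + c' * ln 16 + c' * ln (2 * c')) * real (b - a) powr (- c')"
          using bad_bound[OF mn ab, folded \<epsilon>_def] final_ineq[OF eps L c' c hyp] by linarith
      qed
    qed
  qed
qed


end
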